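(* Let $m\ge 1$, let $P_1\ge\dots\ge P_{2^m}>0$ and $P_1^d\ge\dots\ge P^d_{2^m}>0$, and let $N_i^e(t),N_i^d(t)$, $1\le i\le 2^m-1$, be positive integers. Let $\{i,i+1\}^e$ and $\{i,i+1\}^d$, $1\le i\le 2^m-1$, be events in a probability space such that $\Pr\{\{i,i+1\}^e\}=(P_{i+1}/P_i)^{N_i^e(t)}$ and $\Pr\{\{i,i+1\}^d\}=(P^d_{i+1}/P^d_i)^{N_i^d(t)}$ for all $i$, and such that each of the four families $\{\{2i-1,2i\}^e\}_{i=1}^{2^{m-1}}$, $\{\{2i,2i+1\}^e\}_{i=1}^{2^{m-1}-1}$, $\{\{2i-1,2i\}^d\}_{i=1}^{2^{m-1}}$, $\{\{2i,2i+1\}^d\}_{i=1}^{2^{m-1}-1}$ consists of mutually independent events. Let $W=\left(\bigcup_{i=1}^{2^m-1}\{i,i+1\}^e\right)\cup\left(\bigcup_{i=1}^{2^m-1}\{i,i+1\}^d\right)$ and $P_W=\Pr\{W\}$. Then $$P_W\le 4-\prod_{i=1}^{2^{m-1}}\left(1-\left(\tfrac{P_{2i}}{P_{2i-1}}\right)^{N^e_{2i-1}(t)}\right)-\prod_{i=1}^{2^{m-1}-1}\left(1-\left(\tfrac{P_{2i+1}}{P_{2i}}\right)^{N^e_{2i}(t)}\right)-\prod_{i=1}^{2^{m-1}}\left(1-\left(\tfrac{P^d_{2i}}{P^d_{2i-1}}\right)^{N^d_{2i-1}(t)}\right)-\prod_{i=1}^{2^{m-1}-1}\left(1-\left(\t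frac{P^d_{2i+1}}{P^d_{2i}}\right)^{N^d_{2i}(t)}\right).$$
   Context: Interpretation: for a rate-1 direct shaping code with parsing length $m$ whose dictionary is stable at time $t$ (encoder counts $n_1^e(t)>\dots>n^e_{2^m}(t)$ and decoder counts $n_1^d(t)>\dots>n^d_{2^m}(t)$), $N_i^e(t)=n_i^e(t)-n_{i+1}^e(t)$, $N_i^d(t)=n_i^d(t)-n_{i+1}^d(t)$; $\{i,i+1\}^e$ (resp. $\{i,i+1\}^d$) is the event that the encoder (resp. decoder) counts of the $i$th and $(i+1)$st words become equal at some future time; $P_i$ are the input word probabilities and $P_i^d=\sum_j\rho^{d(i,j)}(1-\rho)^{m-d(i,j)}P_j$ (with $d$ the Hamming distance, $\rho$ the BSC crossover probability) the decoder output probabilities. The paper treats recurrences between non-overlapping adjacent pairs as independent and uses the one-dimensional gambler's-ruin probabilities for each pair; these are stated as hypotheses in the claim. *)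

theory Defs
  imports "HOL-Probability.Probability"
begin

end

theory Submission
  imports Defs
begin

lemma (in prob_space) union_indep_prob:
  assumes fin: "finite I" and ind: "indep_events A I"
  shows "prob (\<Union>i\<in>I. A i) = 1 - (\<Prod>i\<in>I. 1 - prob (A i))"
proof (cases "I = {}")
  case True then show ?thesis by simp
next
  case False
  have ev: "\<And>i. i \<in> I \<Longrightarrow> A i \<in> events" using ind by (auto simp: indep_events_def)
  have "indep_sets (\<lambda>i. sigma_sets (space M) {A i}) I"
    using ind unfolding indep_events_def_alt
    by (rule indep_sets_sigma) (auto simp: Int_stable_def)
  then have "indep_sets (\<lambda>i. {space M - A i}) I"
    by (rule indep_sets_mono_sets) (auto intro: sigma_sets.Compl sigma_sets.Basic)
  then have indc: "indep_events (\<lambda>i. space M - A i) I"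
    unfolding indep_events_def_alt .
  have "prob (\<Inter>i\<in>I. space M - A i) = (\<Prod>i\<in>I. prob (space M - A i))"
    using indc fin False by (auto simp: indep_events_def)
  also have "\<dots> = (\<Prod>i\<in>I. 1 - prob (A i))"
    using ev by (intro prod.cong refl) (simp add: prob_compl)
  finally have *: "prob (\<Inter>i\<in>I. space M - A i) = (\<Prod>i\<in>I. 1 - prob (A i))" .
  have eq: "(\<Inter>i\<in>I. space M - A i) = space M - (\<Union>i\<in>I. A i)" using False by auto
  have U: "(\<Union>i\<in>I. A i) \<in> events" using ev fin by auto
  show ?thesis using * U False by (simp add: eq prob_compl)
qed

theorem lemma2:
  fixes M :: "'a measure"
    and m :: nat
    and P Pd :: "nat \<Rightarrow> real"
    and Ne Nd :: "nat \<Rightarrow> nat"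
    and Ee Ed :: "nat \<Rightarrow> 'a set"
  assumes "prob_space M"
    and "m \<ge> 1"
    and P_mono: "\<And>i. 1 \<le> i \<Longrightarrow> i < 2^m \<Longrightarrow> P (Suc i) \<le> P i"
    and P_pos: "P (2^m) > 0"
    and Pd_mono: "\<And>i. 1 \<le> i \<Longrightarrow> i < 2^m \<Longrightarrow> Pd (Suc i) \<le> Pd i"
    and Pd_pos: "Pd (2^m) > 0"
    and Ne_pos: "\<And>i. 1 \<le> i \<Longrightarrow> i < 2^m \<Longrightarrow> Ne i > 0"
    and Nd_pos: "\<And>i. 1 \<le> i \<Longrightarrow> i < 2^m \<Longrightarrow> Nd i > 0"
    and Ee_ev: "\<And>i. 1 \<le> i \<Longrightarrow> i < 2^m \<Longrightarrow> Ee i \<in> sets M"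
    and Ed_ev: "\<And>i. 1 \<le> i \<Longrightarrow> i < 2^m \<Longrightarrow> Ed i \<in> sets M"
    and Ee_prob: "\<And>i. 1 \<le> i \<Longrightarrow> i < 2^m \<Longrightarrow>
                    measure M (Ee i) = (P (Suc i) / P i) ^ Ne i"
    and Ed_prob: "\<And>i. 1 \<le> i \<Longrightarrow> i < 2^m \<Longrightarrow>
                    measure M (Ed i) = (Pd (Suc i) / Pd i) ^ Nd i"
    and ind_e1: "prob_space.indep_events M (\<lambda>i. Ee (2*i - 1)) {1..2^(m-1)}"
    and ind_e2: "prob_space.indep_events M (\<lambda>i. Ee (2*i)) {1..2^(m-1) - 1}"
    and ind_d1: "prob_space.indep_events M (\<lambda>i. Ed (2*i - 1)) {1..2^(m-1)}"
    and ind_d2: "prob_space.indep_events M (\<lambda>i. Ed (2*i)) {1..2^(m-1) - 1}"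
  shows "measure M ((\<Union>i\<in>{1..2^m - 1}. Ee i) \<union> (\<Union>i\<in>{1..2^m - 1}. Ed i))
    \<le> 4 - (\<Prod>i=1..2^(m-1). 1 - (P (2*i) / P (2*i - 1)) ^ Ne (2*i - 1))
        - (\<Prod>i=1..2^(m-1) - 1. 1 - (P (2*i + 1) / P (2*i)) ^ Ne (2*i))
        - (\<Prod>i=1..2^(m-1). 1 - (Pd (2*i) / Pd (2*i - 1)) ^ Nd (2*i - 1))
        - (\<Prod>i=1..2^(m-1) - 1. 1 - (Pd (2*i + 1) / Pd (2*i)) ^ Nd (2*i))"
proof -
  interpret prob_space M by fact
  define K where "K = (2::nat)^(m-1)"
  have K2: "(2::nat)^m = 2*K" using assms(2) unfolding K_def
    by (metis Suc_diff_le diff_Suc_1 power_Suc)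
  have Kpos: "K \<ge> 1" unfolding K_def by simp
  have split: "(\<Union>i\<in>{1..2^m - 1}. E i) = (\<Union>i\<in>{1..K}. E (2*i - 1)) \<union> (\<Union>i\<in>{1..K - 1}. E (2*i))"
    for E :: "nat \<Rightarrow> 'a set"
  proof
    show "(\<Union>i\<in>{1..2^m - 1}. E i) \<subseteq> (\<Union>i\<in>{1..K}. E (2*i - 1)) \<union> (\<Union>i\<in>{1..K - 1}. E (2*i))"
    proof
      fix x assume "x \<in> (\<Union>i\<in>{1..2^m - 1}. E i)"
      then obtain j where j: "j \<in> {1..2*K - 1}" "x \<in> E j" using K2 by auto
      show "x \<in> (\<Union>i\<in>{1..K}. E (2*i - 1)) \<union> (\<Union>i\<in>{1..K - 1}. E (2*i))"
      proof (cases "even j")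
        case True
        then obtain i where "j = 2*i" by blast
        then show ?thesis using j by auto
      next
        case False
        then obtain i where "j = 2*i + 1" using oddE by blast
        then have "j = 2*(i+1) - 1" "i + 1 \<in> {1..K}" using j by auto
        then show ?thesis using j by blast
      qed
    qed
  next
    show "(\<Union>i\<in>{1..K}. E (2*i - 1)) \<union> (\<Union>i\<in>{1..K - 1}. E (2*i)) \<subseteq> (\<Union>i\<in>{1..2^m - 1}. E i)"
    proof
      fix x assume "x \<in> (\<Union>i\<in>{1..K}. E (2*i - 1)) \<union> (\<Union>i\<in>{1..K - 1}. E (2*i))"
      then show "x \<in> (\<Union>i\<in>{1..2^m - 1}. E i)"
      proof
        assume "x \<in> (\<Union>i\<in>{1..K}. E (2*i - 1))"
        then obtain i where "i \<in> {1..K}" "x \<in> E (2*i - 1)" by auto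
        moreover have "2*i - 1 \<in> {1..2^m - 1}" using calculation(1) K2 by auto
        ultimately show ?thesis by blast
      next
        assume "x \<in> (\<Union>i\<in>{1..K - 1}. E (2*i))"
        then obtain i where "i \<in> {1..K - 1}" "x \<in> E (2*i)" by auto
        moreover have "2*i \<in> {1..2^m - 1}" using calculation(1) K2 by auto
        ultimately show ?thesis by blast
      qed
    qed
  qed
  define A1 where "A1 = (\<Union>i\<in>{1..K}. Ee (2*i - 1))"
  define A2 where "A2 = (\<Union>i\<in>{1..K - 1}. Ee (2*i))"
  define A3 where "A3 = (\<Union>i\<in>{1..K}. Ed (2*i - 1))"
  define A4 where "A4 = (\<Union>i\<in>{1..K - 1}. Ed (2*i))"
  have i1: "\<And>i. i \<in> {1..K} \<Longrightarrow> 1 \<le> 2*i - 1 \<and> 2*i - 1 < 2^m \<and> Suc (2*i - 1) = 2*i"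
    using K2 by auto
  have i2: "\<And>i. i \<in> {1..K - 1} \<Longrightarrow> 1 \<le> 2*i \<and> 2*i < 2^m \<and> Suc (2*i) = 2*i + 1"
    using K2 by auto
  have A1ev: "A1 \<in> events" unfolding A1_def using i1 Ee_ev by (intro sets.finite_UN) auto
  have A2ev: "A2 \<in> events" unfolding A2_def using i2 Ee_ev by (intro sets.finite_UN) auto
  have A3ev: "A3 \<in> events" unfolding A3_def using i1 Ed_ev by (intro sets.finite_UN) auto
  have A4ev: "A4 \<in> events" unfolding A4_def using i2 Ed_ev by (intro sets.finite_UN) auto
  have p1: "prob A1 = 1 - (\<Prod>i=1..K. 1 - (P (2*i) / P (2*i - 1)) ^ Ne (2*i - 1))"
  proof -
    have "prob A1 = 1 - (\<Prod>i=1..K. 1 - prob (Ee (2*i - 1)))"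
      unfolding A1_def using ind_e1 K_def by (intro union_indep_prob) auto
    also have "\<dots> = 1 - (\<Prod>i=1..K. 1 - (P (2*i) / P (2*i - 1)) ^ Ne (2*i - 1))"
      using i1 Ee_prob by (intro arg_cong2[where f="(-)"] refl prod.cong) auto
    finally show ?thesis .
  qed
  have p2: "prob A2 = 1 - (\<Prod>i=1..K - 1. 1 - (P (2*i + 1) / P (2*i)) ^ Ne (2*i))"
  proof -
    have "prob A2 = 1 - (\<Prod>i=1..K - 1. 1 - prob (Ee (2*i)))"
      unfolding A2_def using ind_e2 K_def by (intro union_indep_prob) auto
    also have "\<dots> = 1 - (\<Prod>i=1..K - 1. 1 - (P (2*i + 1) / P (2*i)) ^ Ne (2*i))"
      using i2 Ee_prob by (intro arg_cong2[where f="(-)"] refl prod.cong) auto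
    finally show ?thesis .
  qed
  have p3: "prob A3 = 1 - (\<Prod>i=1..K. 1 - (Pd (2*i) / Pd (2*i - 1)) ^ Nd (2*i - 1))"
  proof -
    have "prob A3 = 1 - (\<Prod>i=1..K. 1 - prob (Ed (2*i - 1)))"
      unfolding A3_def using ind_d1 K_def by (intro union_indep_prob) auto
    also have "\<dots> = 1 - (\<Prod>i=1..K. 1 - (Pd (2*i) / Pd (2*i - 1)) ^ Nd (2*i - 1))"
      using i1 Ed_prob by (intro arg_cong2[where f="(-)"] refl prod.cong) auto
    finally show ?thesis .
  qed
  have p4: "prob A4 = 1 - (\<Prod>i=1..K - 1. 1 - (Pd (2*i + 1) / Pd (2*i)) ^ Nd (2*i))"
  proof -
    have "prob A4 = 1 - (\<Prod>i=1..K - 1. 1 - prob (Ed (2*i)))"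
      unfolding A4_def using ind_d2 K_def by (intro union_indep_prob) auto
    also have "\<dots> = 1 - (\<Prod>i=1..K - 1. 1 - (Pd (2*i + 1) / Pd (2*i)) ^ Nd (2*i))"
      using i2 Ed_prob by (intro arg_cong2[where f="(-)"] refl prod.cong) auto
    finally show ?thesis .
  qed
  have eqU: "(\<Union>i\<in>{1..2^m - 1}. Ee i) \<union> (\<Union>i\<in>{1..2^m - 1}. Ed i) = (A1 \<union> A2) \<union> (A3 \<union> A4)"
    unfolding A1_def A2_def A3_def A4_def split by auto
  have "prob ((A1 \<union> A2) \<union> (A3 \<union> A4)) \<le> prob (A1 \<union> A2) + prob (A3 \<union> A4)"
    using A1ev A2ev A3ev A4ev by (intro measure_subadditive) auto
  also have "\<dots> \<le> (prob A1 + prob A2) + (prob A3 + prob A4)"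
    using A1ev A2ev A3ev A4ev by (intro add_mono measure_subadditive) auto
  finally show ?thesis unfolding eqU p1 p2 p3 p4 K_def by simp
qed

end
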